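(* Let $S,T,V$ be ordered trees and let $i\colon S\to T$ and $j\colon T\to V$ be embeddings. Let $x$ be a leaf of $S$, $y$ a leaf of $T$ and $z$ a leaf of $V$. If $y$ is $i$-conjugate to $x$ and $z$ is $j$-conjugate to $y$, then $z$ is $(j\circ i)$-conjugate to $x$.
   Context: A tree is a finite, non-empty poset $(T,\sqsubseteq_T)$ with a smallest element (root) in which the predecessors of each element form a chain (each element is its own predecessor); $v\wedge_T w$ is the largest common predecessor. An ordered tree has a fixed linear order on the immediate successors of each node, inducing the lexicographic linear order $\leq_T$: $v\leq_T w$ if $v\sqsubseteq_T w$, and for incomparable $v,w$, $v\leq_T w$ iff the immediate successor of $v\wedge_T w$ below $v$ precedes the one below $w$. A morphism preserves $\wedge$, is $\leq$-monotone and maps root to root; an embedding is an injective morphism. A leaf is a $\sqsubseteq$-maximal node. For an embedding $i\colon S\to T$, a leaf $y$ of $T$ is $i$-conjugate to a leaf $x$ of $S$ if: (i) when $x$ is the $\leq_S$-largest leaf of $S$, $y$ is the $\leq_T$-largest leaf of $T$; (ii) otherwise, letting $x'$ be the $\leq_S$-smallest leaf of $S$ with $x<_S x'$, $y$ is the $\leq_T$-largest leaf of $T$ such that $y<_T i(x')$ and $i(x)\wedge_T i(x')=y\wedge_T i(x')$. *)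

theory Defs
  imports Main
begin

text \<open>An ordered tree is given by a carrier set A, the tree order P (v \<sqsubseteq> w written P v w)
and a sibling order R, which linearly orders the immediate successors of each node.\<close>

definition is_tree :: "'a set \<Rightarrow> ('a \<Rightarrow> 'a \<Rightarrow> bool) \<Rightarrow> bool" where
  "is_tree A P \<longleftrightarrow> finite A \<and> A \<noteq> {}
     \<and> (\<forall>v\<in>A. P v v)
     \<and> (\<forall>v\<in>A. \<forall>w\<in>A. P v w \<and> P w v \<longrightarrow> v = w)
     \<and> (\<forall>u\<in>A. \<forall>v\<in>A. \<forall>w\<in>A. P u v \<and> P v w \<longrightarrow> P u w)
     \<and> (\<exists>r\<in>A. \<forall>v\<in>A. P r v)
     \<and> (\<forall>v\<in>A. \<forall>u\<in>A. \<forall>u'\<in>A. P u v \<and> P u' v \<longrightarrow> P u u' \<or> P u' u)"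

definition tree_root :: "'a set \<Rightarrow> ('a \<Rightarrow> 'a \<Rightarrow> bool) \<Rightarrow> 'a" where
  "tree_root A P = (THE r. r \<in> A \<and> (\<forall>v\<in>A. P r v))"

definition tree_meet :: "'a set \<Rightarrow> ('a \<Rightarrow> 'a \<Rightarrow> bool) \<Rightarrow> 'a \<Rightarrow> 'a \<Rightarrow> 'a" where
  "tree_meet A P v w = (THE m. m \<in> A \<and> P m v \<and> P m w \<and> (\<forall>u\<in>A. P u v \<and> P u w \<longrightarrow> P u m))"

definition tree_children :: "'a set \<Rightarrow> ('a \<Rightarrow> 'a \<Rightarrow> bool) \<Rightarrow> 'a \<Rightarrow> 'a set" where
  "tree_children A P m = {u\<in>A. P m u \<and> u \<noteq> m \<and> (\<forall>x\<in>A. P m x \<and> P x u \<longrightarrow> x = m \<or> x = u)}"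

definition is_ordered_tree :: "'a set \<Rightarrow> ('a \<Rightarrow> 'a \<Rightarrow> bool) \<Rightarrow> ('a \<Rightarrow> 'a \<Rightarrow> bool) \<Rightarrow> bool" where
  "is_ordered_tree A P R \<longleftrightarrow> is_tree A P
     \<and> (\<forall>u v. R u v \<longrightarrow> (\<exists>m\<in>A. u \<in> tree_children A P m \<and> v \<in> tree_children A P m))
     \<and> (\<forall>m\<in>A. let C = tree_children A P m in
          (\<forall>u\<in>C. R u u) \<and> (\<forall>u\<in>C. \<forall>v\<in>C. R u v \<and> R v u \<longrightarrow> u = v)
          \<and> (\<forall>u\<in>C. \<forall>v\<in>C. \<forall>w\<in>C. R u v \<and> R v w \<longrightarrow> R u w)
          \<and> (\<forall>u\<in>C. \<forall>v\<in>C. R u v \<or> R v u))"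

definition child_toward :: "'a set \<Rightarrow> ('a \<Rightarrow> 'a \<Rightarrow> bool) \<Rightarrow> 'a \<Rightarrow> 'a \<Rightarrow> 'a" where
  "child_toward A P m v = (THE u. u \<in> tree_children A P m \<and> P u v)"

definition lex_le :: "'a set \<Rightarrow> ('a \<Rightarrow> 'a \<Rightarrow> bool) \<Rightarrow> ('a \<Rightarrow> 'a \<Rightarrow> bool) \<Rightarrow> 'a \<Rightarrow> 'a \<Rightarrow> bool" where
  "lex_le A P R v w \<longleftrightarrow> P v w \<or>
     (\<not> P v w \<and> \<not> P w v \<and>
      R (child_toward A P (tree_meet A P v w) v) (child_toward A P (tree_meet A P v w) w))"

definition lex_less :: "'a set \<Rightarrow> ('a \<Rightarrow> 'a \<Rightarrow> bool) \<Rightarrow> ('a \<Rightarrow> 'a \<Rightarrow> bool) \<Rightarrow> 'a \<Rightarrow> 'a \<Rightarrow> bool" where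
  "lex_less A P R v w \<longleftrightarrow> lex_le A P R v w \<and> v \<noteq> w"

definition otree_morphism ::
  "'a set \<Rightarrow> ('a \<Rightarrow> 'a \<Rightarrow> bool) \<Rightarrow> ('a \<Rightarrow> 'a \<Rightarrow> bool) \<Rightarrow>
   'b set \<Rightarrow> ('b \<Rightarrow> 'b \<Rightarrow> bool) \<Rightarrow> ('b \<Rightarrow> 'b \<Rightarrow> bool) \<Rightarrow> ('a \<Rightarrow> 'b) \<Rightarrow> bool" where
  "otree_morphism A P R B Q R' f \<longleftrightarrow>
     f ` A \<subseteq> B
     \<and> (\<forall>v\<in>A. \<forall>w\<in>A. f (tree_meet A P v w) = tree_meet B Q (f v) (f w))
     \<and> (\<forall>v\<in>A. \<forall>w\<in>A. lex_le A P R v w \<longrightarrow> lex_le B Q R' (f v) (f w))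
     \<and> f (tree_root A P) = tree_root B Q"

definition otree_embedding ::
  "'a set \<Rightarrow> ('a \<Rightarrow> 'a \<Rightarrow> bool) \<Rightarrow> ('a \<Rightarrow> 'a \<Rightarrow> bool) \<Rightarrow>
   'b set \<Rightarrow> ('b \<Rightarrow> 'b \<Rightarrow> bool) \<Rightarrow> ('b \<Rightarrow> 'b \<Rightarrow> bool) \<Rightarrow> ('a \<Rightarrow> 'b) \<Rightarrow> bool" where
  "otree_embedding A P R B Q R' f \<longleftrightarrow> otree_morphism A P R B Q R' f \<and> inj_on f A"

definition is_leaf :: "'a set \<Rightarrow> ('a \<Rightarrow> 'a \<Rightarrow> bool) \<Rightarrow> 'a \<Rightarrow> bool" where
  "is_leaf A P v \<longleftrightarrow> v \<in> A \<and> (\<forall>w\<in>A. P v w \<longrightarrow> w = v)"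

definition conjugate ::
  "'a set \<Rightarrow> ('a \<Rightarrow> 'a \<Rightarrow> bool) \<Rightarrow> ('a \<Rightarrow> 'a \<Rightarrow> bool) \<Rightarrow>
   'b set \<Rightarrow> ('b \<Rightarrow> 'b \<Rightarrow> bool) \<Rightarrow> ('b \<Rightarrow> 'b \<Rightarrow> bool) \<Rightarrow> ('a \<Rightarrow> 'b) \<Rightarrow> 'a \<Rightarrow> 'b \<Rightarrow> bool" where
  "conjugate A P R B Q R' i x y \<longleftrightarrow>
     (if (\<forall>x'. is_leaf A P x' \<longrightarrow> lex_le A P R x' x) then
        is_leaf B Q y \<and> (\<forall>y'. is_leaf B Q y' \<longrightarrow> lex_le B Q R' y' y)
      else
        (let x' = (THE x'. is_leaf A P x' \<and> lex_less A P R x x' \<and>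
                     (\<forall>x''. is_leaf A P x'' \<and> lex_less A P R x x'' \<longrightarrow> lex_le A P R x' x''));
             good = (\<lambda>y. is_leaf B Q y \<and> lex_less B Q R' y (i x') \<and>
                     tree_meet B Q (i x) (i x') = tree_meet B Q y (i x'))
         in good y \<and> (\<forall>y'. good y' \<longrightarrow> lex_le B Q R' y' y)))"

end

theory Submission
  imports Defs
begin

lemma finite_total_max:
  assumes "finite X" "X \<noteq> {}"
    and "\<forall>a\<in>X. \<forall>b\<in>X. Q a b \<or> Q b a"
    and "\<forall>a\<in>X. \<forall>b\<in>X. \<forall>c\<in>X. Q a b \<longrightarrow> Q b c \<longrightarrow> Q a c"
  shows "\<exists>m\<in>X. \<forall>a\<in>X. Q a m"
  using assms
proof (induction X rule: finite_ne_induct)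
  case (singleton x)
  have "Q x x" using singleton.prems(1) by blast
  then show ?case by blast
next
  case (insert x F)
  have p1: "\<forall>a\<in>F. \<forall>b\<in>F. Q a b \<or> Q b a" using insert.prems(1) by blast
  have p2: "\<forall>a\<in>F. \<forall>b\<in>F. \<forall>c\<in>F. Q a b \<longrightarrow> Q b c \<longrightarrow> Q a c" using insert.prems(2) by blast
  have "\<exists>m\<in>F. \<forall>a\<in>F. Q a m" using insert.IH[OF p1 p2] .
  then obtain m where m: "m\<in>F" "\<forall>a\<in>F. Q a m" by blast
  show ?case
  proof (cases "Q x m")
    case True then show ?thesis using m by blast
  next
    case False
    then have mx: "Q m x" using insert.prems(1) m(1) by blast
    have xx: "Q x x" using insert.prems(1) by blast
    have "\<forall>a\<in>insert x F. Q a x"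
    proof
      fix a assume a: "a \<in> insert x F"
      show "Q a x"
      proof (cases "a = x")
        case True then show ?thesis using xx by simp
      next
        case False
        then have "a \<in> F" using a by simp
        then show ?thesis using mx m insert.prems(2) by blast
      qed
    qed
    then show ?thesis by blast
  qed
qed

lemma finite_po_maximal:
  assumes "finite X" "X \<noteq> {}"
    and "\<forall>a\<in>X. \<forall>b\<in>X. Q a b \<longrightarrow> Q b a \<longrightarrow> a = b"
    and "\<forall>a\<in>X. \<forall>b\<in>X. \<forall>c\<in>X. Q a b \<longrightarrow> Q b c \<longrightarrow> Q a c"
  shows "\<exists>m\<in>X. \<forall>a\<in>X. Q m a \<longrightarrow> a = m"
  using assms
proof (induction X rule: finite_ne_induct)
  case (singleton x) show ?case by blast
next
  case (insert x F)
  have p1: "\<forall>a\<in>F. \<forall>b\<in>F. Q a b \<longrightarrow> Q b a \<longrightarrow> a = b" using insert.prems(1) by blast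
  have p2: "\<forall>a\<in>F. \<forall>b\<in>F. \<forall>c\<in>F. Q a b \<longrightarrow> Q b c \<longrightarrow> Q a c" using insert.prems(2) by blast
  have "\<exists>m\<in>F. \<forall>a\<in>F. Q m a \<longrightarrow> a = m" using insert.IH[OF p1 p2] .
  then obtain m where m: "m\<in>F" "\<forall>a\<in>F. Q m a \<longrightarrow> a = m" by blast
  show ?case
  proof (cases "Q m x")
    case True
    have "\<forall>a\<in>insert x F. Q x a \<longrightarrow> a = x"
    proof (intro ballI impI)
      fix a assume a: "a \<in> insert x F" and xa: "Q x a"
      show "a = x"
      proof (cases "a = x")
        case False
        then have aF: "a \<in> F" using a by simp
        then have "Q m a" using True xa insert.prems(2) m(1) by blast
        then have "a = m" using m aF by blast
        then show ?thesis using True xa insert.prems(1) m(1) by blast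
      qed simp
    qed
    then show ?thesis by blast
  next
    case False
    then show ?thesis using m by blast
  qed
qed

locale otr =
  fixes A :: "'a set" and P R :: "'a \<Rightarrow> 'a \<Rightarrow> bool"
  assumes ot: "is_ordered_tree A P R"
begin

abbreviation "mt \<equiv> tree_meet A P"
abbreviation "ch \<equiv> child_toward A P"
abbreviation "le \<equiv> lex_le A P R"
abbreviation "lt \<equiv> lex_less A P R"
abbreviation "lf \<equiv> is_leaf A P"
abbreviation "kids \<equiv> tree_children A P"

lemma tree: "is_tree A P" using ot by (simp add: is_ordered_tree_def)
lemma fin: "finite A" using tree by (simp add: is_tree_def)
lemma refl: "v\<in>A \<Longrightarrow> P v v" using tree by (simp add: is_tree_def)
lemma antisym: "v\<in>A \<Longrightarrow> w\<in>A \<Longrightarrow> P v w \<Longrightarrow> P w v \<Longrightarrow> v = w"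
  using tree unfolding is_tree_def by blast
lemma trans: "u\<in>A \<Longrightarrow> v\<in>A \<Longrightarrow> w\<in>A \<Longrightarrow> P u v \<Longrightarrow> P v w \<Longrightarrow> P u w"
  using tree unfolding is_tree_def by blast
lemma root: "\<exists>r\<in>A. \<forall>v\<in>A. P r v" using tree unfolding is_tree_def by blast
lemma chain: "v\<in>A \<Longrightarrow> u\<in>A \<Longrightarrow> u'\<in>A \<Longrightarrow> P u v \<Longrightarrow> P u' v \<Longrightarrow> P u u' \<or> P u' u"
  using tree unfolding is_tree_def by blast

lemma Rprops: assumes "m\<in>A"
  shows "\<forall>u\<in>kids m. R u u" "\<forall>u\<in>kids m. \<forall>v\<in>kids m. R u v \<and> R v u \<longrightarrow> u = v"
    "\<forall>u\<in>kids m. \<forall>v\<in>kids m. \<forall>w\<in>kids m. R u v \<and> R v w \<longrightarrow> R u w"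
    "\<forall>u\<in>kids m. \<forall>v\<in>kids m. R u v \<or> R v u"
  using ot assms unfolding is_ordered_tree_def Let_def by blast+

lemma kid: "c \<in> kids m \<Longrightarrow> c\<in>A \<and> P m c \<and> c \<noteq> m"
  unfolding tree_children_def by blast

lemma kid_min: "c \<in> kids m \<Longrightarrow> x\<in>A \<Longrightarrow> P m x \<Longrightarrow> P x c \<Longrightarrow> x = m \<or> x = c"
  unfolding tree_children_def by blast

lemma meet_eqI:
  assumes "v\<in>A" "w\<in>A" "m\<in>A" "P m v" "P m w" "\<And>u. u\<in>A \<Longrightarrow> P u v \<Longrightarrow> P u w \<Longrightarrow> P u m"
  shows "mt v w = m"
  unfolding tree_meet_def
proof (rule the_equality)
  show "m \<in> A \<and> P m v \<and> P m w \<and> (\<forall>u\<in>A. P u v \<and> P u w \<longrightarrow> P u m)" using assms by blast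
next
  fix m' assume "m' \<in> A \<and> P m' v \<and> P m' w \<and> (\<forall>u\<in>A. P u v \<and> P u w \<longrightarrow> P u m')"
  then show "m' = m" using assms antisym by blast
qed

lemma meet_ex: assumes "v\<in>A" "w\<in>A"
  shows "\<exists>m. m\<in>A \<and> P m v \<and> P m w \<and> (\<forall>u\<in>A. P u v \<and> P u w \<longrightarrow> P u m)"
proof -
  let ?X = "{u\<in>A. P u v \<and> P u w}"
  have "finite ?X" using fin by simp
  moreover have "?X \<noteq> {}" using root assms by blast
  moreover have "\<forall>a\<in>?X. \<forall>b\<in>?X. P a b \<or> P b a" using chain assms by blast
  moreover have "\<forall>a\<in>?X. \<forall>b\<in>?X. \<forall>c\<in>?X. P a b \<longrightarrow> P b c \<longrightarrow> P a c" using trans by blast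
  ultimately obtain m where "m\<in>?X" "\<forall>a\<in>?X. P a m" using finite_total_max[of ?X P] by blast
  then show ?thesis by blast
qed

lemma meet: assumes "v\<in>A" "w\<in>A"
  shows "mt v w \<in> A" "P (mt v w) v" "P (mt v w) w" "\<And>u. u\<in>A \<Longrightarrow> P u v \<Longrightarrow> P u w \<Longrightarrow> P u (mt v w)"
proof -
  obtain m where m: "m\<in>A" "P m v" "P m w" "\<forall>u\<in>A. P u v \<and> P u w \<longrightarrow> P u m"
    using meet_ex[OF assms] by blast
  have e: "mt v w = m" using meet_eqI[OF assms m(1-3)] m(4) by blast
  show "mt v w \<in> A" "P (mt v w) v" "P (mt v w) w" "\<And>u. u\<in>A \<Longrightarrow> P u v \<Longrightarrow> P u w \<Longrightarrow> P u (mt v w)"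
    using e m by auto
qed

lemma meet_comm: "v\<in>A \<Longrightarrow> w\<in>A \<Longrightarrow> mt v w = mt w v"
  by (rule meet_eqI) (auto intro: meet)

lemma meet_self: "v\<in>A \<Longrightarrow> w\<in>A \<Longrightarrow> P v w \<Longrightarrow> mt v w = v"
  by (rule meet_eqI) (auto intro: refl)

lemma meet_self2: "v\<in>A \<Longrightarrow> w\<in>A \<Longrightarrow> P w v \<Longrightarrow> mt v w = w"
  by (rule meet_eqI) (auto intro: refl)

lemma child_ex: assumes "m\<in>A" "v\<in>A" "P m v" "m \<noteq> v"
  shows "\<exists>c\<in>kids m. P c v"
proof -
  let ?X = "{u\<in>A. P m u \<and> u \<noteq> m \<and> P u v}"
  have "finite ?X" using fin by simp
  moreover have "?X \<noteq> {}" using assms refl by blast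
  moreover have "\<forall>a\<in>?X. \<forall>b\<in>?X. (\<lambda>a b. P b a) a b \<or> (\<lambda>a b. P b a) b a" using chain assms by blast
  moreover have "\<forall>a\<in>?X. \<forall>b\<in>?X. \<forall>c\<in>?X. (\<lambda>a b. P b a) a b \<longrightarrow> (\<lambda>a b. P b a) b c \<longrightarrow> (\<lambda>a b. P b a) a c"
    using trans by blast
  ultimately obtain c where c: "c\<in>?X" "\<forall>a\<in>?X. P c a" using finite_total_max[of ?X "\<lambda>a b. P b a"] by blast
  have "c \<in> kids m"
    unfolding tree_children_def
  proof (intro CollectI conjI ballI impI)
    show "c \<in> A" "P m c" "c \<noteq> m" using c by auto
    fix x assume x: "x\<in>A" "P m x \<and> P x c"
    show "x = m \<or> x = c"
    proof (cases "x = m")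
      case False
      then have "x \<in> ?X" using x c trans[of x c v] assms by auto
      then have "P c x" using c by blast
      then show ?thesis using antisym x c by blast
    qed simp
  qed
  then show ?thesis using c by blast
qed

lemma child_unique: "c1 \<in> kids m \<Longrightarrow> c2 \<in> kids m \<Longrightarrow> v\<in>A \<Longrightarrow> P c1 v \<Longrightarrow> P c2 v \<Longrightarrow> c1 = c2"
  using chain[of v c1 c2] kid[of c1 m] kid[of c2 m] kid_min[of c1 m c2] kid_min[of c2 m c1] by blast

lemma ch_eq: "c \<in> kids m \<Longrightarrow> v\<in>A \<Longrightarrow> P c v \<Longrightarrow> ch m v = c"
  unfolding child_toward_def using child_unique by blast

lemma ch_props: assumes "m\<in>A" "v\<in>A" "P m v" "m \<noteq> v"
  shows "ch m v \<in> kids m" "P (ch m v) v"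
proof -
  obtain c where "c\<in>kids m" "P c v" using child_ex[OF assms] by blast
  then show "ch m v \<in> kids m" "P (ch m v) v" using ch_eq[of c m v] assms by auto
qed

lemma ch_desc: assumes "m\<in>A" "v\<in>A" "v'\<in>A" "P m v" "m \<noteq> v" "P v v'"
  shows "ch m v' = ch m v"
proof -
  have "ch m v \<in> kids m" "P (ch m v) v" using ch_props assms by auto
  then show ?thesis using ch_eq[of "ch m v" m v'] trans[of "ch m v" v v'] kid assms by blast
qed

lemma sep: assumes "m\<in>A" "u\<in>A" "w\<in>A" "P m u" "P m w" "m \<noteq> u" "m \<noteq> w" "ch m u \<noteq> ch m w"
  shows "mt u w = m" "\<not> P u w" "\<not> P w u" "le u w \<longleftrightarrow> R (ch m u) (ch m w)"
proof -
  show nuw: "\<not> P u w" using ch_desc[of m u w] assms by auto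
  show nwu: "\<not> P w u" using ch_desc[of m w u] assms by auto
  let ?e = "mt u w"
  have e: "?e \<in> A" "P ?e u" "P ?e w" using meet assms by auto
  have me: "P m ?e" using meet(4) assms by auto
  show em: "?e = m"
  proof (rule ccontr)
    assume "?e \<noteq> m"
    then have "ch m u = ch m ?e" "ch m w = ch m ?e" using ch_desc[of m ?e u] ch_desc[of m ?e w] e me assms
      by auto
    then show False using assms by simp
  qed
  show "le u w \<longleftrightarrow> R (ch m u) (ch m w)" unfolding lex_le_def using nuw nwu em by simp
qed

lemma meet_ch_differ: assumes "u\<in>A" "w\<in>A" "\<not> P u w" "\<not> P w u"
  shows "P (mt u w) u" "mt u w \<noteq> u" "P (mt u w) w" "mt u w \<noteq> w" "ch (mt u w) u \<noteq> ch (mt u w) w"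
    "mt u w \<in> A"
proof -
  let ?m = "mt u w"
  show m: "P ?m u" "P ?m w" "?m \<in> A" using meet assms by auto
  show n: "?m \<noteq> u" "?m \<noteq> w" using m assms by auto
  show "ch ?m u \<noteq> ch ?m w"
  proof
    assume eq: "ch ?m u = ch ?m w"
    have c: "ch ?m u \<in> kids ?m" "P (ch ?m u) u" "P (ch ?m w) w" using ch_props m n assms by auto
    then have "P (ch ?m u) ?m" using meet(4)[OF assms(1,2)] eq kid by auto
    moreover have "P ?m (ch ?m u)" "ch ?m u \<noteq> ?m" "ch ?m u \<in> A" using kid[OF c(1)] by auto
    ultimately show False using antisym[of "ch ?m u" ?m] m by blast
  qed
qed

lemma lex_incomp: "\<not> P u w \<Longrightarrow> \<not> P w u \<Longrightarrow> le u w \<longleftrightarrow> R (ch (mt u w) u) (ch (mt u w) w)"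
  unfolding lex_le_def by simp

lemma lex_refl: "v\<in>A \<Longrightarrow> le v v" unfolding lex_le_def using refl by simp

lemma lex_antisym: assumes "u\<in>A" "w\<in>A" "le u w" "le w u" shows "u = w"
proof (cases "P u w \<or> P w u")
  case True
  then show ?thesis using assms antisym unfolding lex_le_def by blast
next
  case False
  let ?m = "mt u w"
  have d: "ch ?m u \<noteq> ch ?m w" "?m \<in> A" "P ?m u" "?m \<noteq> u" "P ?m w" "?m \<noteq> w"
    using meet_ch_differ assms False by auto
  have r: "R (ch ?m u) (ch ?m w)" "R (ch ?m w) (ch ?m u)"
    using assms False lex_incomp meet_comm by auto
  have "ch ?m u \<in> kids ?m" "ch ?m w \<in> kids ?m" using ch_props d assms by auto
  then show ?thesis using Rprops(2)[OF d(2)] r d by blast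
qed

lemma lex_total: assumes "u\<in>A" "w\<in>A" shows "le u w \<or> le w u"
proof (cases "P u w \<or> P w u")
  case True
  then show ?thesis unfolding lex_le_def by blast
next
  case False
  let ?m = "mt u w"
  have d: "ch ?m u \<noteq> ch ?m w" "?m \<in> A" "P ?m u" "?m \<noteq> u" "P ?m w" "?m \<noteq> w"
    using meet_ch_differ assms False by auto
  have "ch ?m u \<in> kids ?m" "ch ?m w \<in> kids ?m" using ch_props d assms by auto
  then have "R (ch ?m u) (ch ?m w) \<or> R (ch ?m w) (ch ?m u)" using Rprops(4)[OF d(2)] by blast
  then show ?thesis using lex_incomp False meet_comm assms by auto
qed

lemma lex_trans_incomp:
  assumes A: "u\<in>A" "v\<in>A" "w\<in>A"
    and i: "\<not> P u v" "\<not> P v u" "\<not> P v w" "\<not> P w v" "\<not> P u w" "\<not> P w u"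
    and uv: "le u v" and vw: "le v w"
  shows "le u w"
proof -
  let ?a = "mt u v" and ?b = "mt v w"
  have a: "P ?a u" "?a \<noteq> u" "P ?a v" "?a \<noteq> v" "ch ?a u \<noteq> ch ?a v" "?a \<in> A"
    using meet_ch_differ[of u v] A i by auto
  have b: "P ?b v" "?b \<noteq> v" "P ?b w" "?b \<noteq> w" "ch ?b v \<noteq> ch ?b w" "?b \<in> A"
    using meet_ch_differ[of v w] A i by auto
  have ra: "R (ch ?a u) (ch ?a v)" using uv lex_incomp i by auto
  have rb: "R (ch ?b v) (ch ?b w)" using vw lex_incomp i by auto
  have "P ?a ?b \<or> P ?b ?a" using chain[of v ?a ?b] a b A by auto
  moreover
  { assume eq: "?a = ?b"
    have k: "ch ?a u \<in> kids ?a" "ch ?a v \<in> kids ?a" "ch ?a w \<in> kids ?a"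
      using ch_props a b A eq by auto
    have rb': "R (ch ?a v) (ch ?a w)" using rb eq by simp
    have r: "R (ch ?a u) (ch ?a w)" using Rprops(3)[OF a(6)] k ra rb' by blast
    have ne: "ch ?a u \<noteq> ch ?a w"
    proof
      assume "ch ?a u = ch ?a w"
      then have "R (ch ?a v) (ch ?a u)" using rb eq by simp
      then show False using Rprops(2)[OF a(6)] k ra a(5) by blast
    qed
    have ?thesis using sep(4)[of ?a u w] a b eq A ne r by auto }
  moreover
  { assume ab: "P ?a ?b" "?a \<noteq> ?b"
    have "ch ?a v = ch ?a ?b" "ch ?a w = ch ?a ?b"
      using ch_desc[of ?a ?b v] ch_desc[of ?a ?b w] a b ab A by auto
    moreover have "P ?a w" using trans[of ?a ?b w] a b ab A by auto
    moreover have "?a \<noteq> w" using a i by auto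
    ultimately have ?thesis using sep(4)[of ?a u w] a A ra by auto }
  moreover
  { assume ba: "P ?b ?a" "?a \<noteq> ?b"
    have "ch ?b v = ch ?b ?a" "ch ?b u = ch ?b ?a"
      using ch_desc[of ?b ?a v] ch_desc[of ?b ?a u] a b ba A by auto
    moreover have "P ?b u" using trans[of ?b ?a u] a b ba A by auto
    moreover have "?b \<noteq> u" using b i by auto
    ultimately have ?thesis using sep(4)[of ?b u w] b A rb by auto }
  ultimately show ?thesis by blast
qed

lemma leaf_in: "lf u \<Longrightarrow> u \<in> A" unfolding is_leaf_def by blast
lemma leaf_le: "lf u \<Longrightarrow> v\<in>A \<Longrightarrow> P u v \<Longrightarrow> v = u" unfolding is_leaf_def by blast

lemma lex_trans_leaf: assumes "lf u" "lf v" "lf w" "le u v" "le v w" shows "le u w"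
proof -
  have A: "u\<in>A" "v\<in>A" "w\<in>A" using assms leaf_in by auto
  show ?thesis
  proof (cases "u = v \<or> v = w \<or> u = w")
    case True
    then show ?thesis using assms lex_refl A by auto
  next
    case False
    have i: "\<not> P u v" "\<not> P v u" "\<not> P v w" "\<not> P w v" "\<not> P u w" "\<not> P w u"
      using leaf_le[OF assms(1)] leaf_le[OF assms(2)] leaf_le[OF assms(3)] A False by blast+
    show ?thesis using lex_trans_incomp[OF A i assms(4,5)] .
  qed
qed

lemma leaf_below: assumes "v\<in>A" shows "\<exists>l. lf l \<and> P v l"
proof -
  let ?X = "{w\<in>A. P v w}"
  have "finite ?X" using fin by simp
  moreover have "?X \<noteq> {}" using assms refl by blast
  moreover have "\<forall>a\<in>?X. \<forall>b\<in>?X. P a b \<longrightarrow> P b a \<longrightarrow> a = b" using antisym by blast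
  moreover have "\<forall>a\<in>?X. \<forall>b\<in>?X. \<forall>c\<in>?X. P a b \<longrightarrow> P b c \<longrightarrow> P a c" using trans by blast
  ultimately obtain m where m: "m\<in>?X" "\<forall>a\<in>?X. P m a \<longrightarrow> a = m" using finite_po_maximal[of ?X P] by blast
  have "lf m" unfolding is_leaf_def using m trans[of v m] assms by blast
  then show ?thesis using m by blast
qed

lemma succ_ex1: assumes "lf x" "\<not> (\<forall>x'. lf x' \<longrightarrow> le x' x)"
  shows "\<exists>!s. lf s \<and> lt x s \<and> (\<forall>x''. lf x'' \<and> lt x x'' \<longrightarrow> le s x'')"
proof -
  let ?X = "{w. lf w \<and> lt x w}"
  obtain l where l: "lf l" "\<not> le l x" using assms by blast
  have "le x l" using lex_total l assms leaf_in by blast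
  moreover have "l \<noteq> x" using l lex_refl leaf_in by blast
  ultimately have "l \<in> ?X" using l unfolding lex_less_def by auto
  then have ne: "?X \<noteq> {}" by blast
  have fX: "finite ?X" using fin by (rule rev_finite_subset) (auto simp: leaf_in)
  have "\<forall>a\<in>?X. \<forall>b\<in>?X. (\<lambda>a b. le b a) a b \<or> (\<lambda>a b. le b a) b a" using lex_total leaf_in by blast
  moreover have "\<forall>a\<in>?X. \<forall>b\<in>?X. \<forall>c\<in>?X. (\<lambda>a b. le b a) a b \<longrightarrow> (\<lambda>a b. le b a) b c \<longrightarrow> (\<lambda>a b. le b a) a c"
    using lex_trans_leaf by blast
  ultimately obtain s where s: "s\<in>?X" "\<forall>a\<in>?X. le s a" using finite_total_max[OF fX ne, of "\<lambda>a b. le b a"] by blast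
  show ?thesis
  proof (rule ex1I[of _ s])
    show "lf s \<and> lt x s \<and> (\<forall>x''. lf x'' \<and> lt x x'' \<longrightarrow> le s x'')" using s by blast
  next
    fix s' assume "lf s' \<and> lt x s' \<and> (\<forall>x''. lf x'' \<and> lt x x'' \<longrightarrow> le s' x'')"
    then show "s' = s" using s lex_antisym leaf_in by blast
  qed
qed

lemma block: assumes "m\<in>A" "a\<in>A" "b\<in>A" "w\<in>A" "P m a" "m \<noteq> a" "P m b" "m \<noteq> b"
    "ch m a = ch m b" "lt w a" "mt w a = m"
  shows "lt w b \<and> mt w b = m"
proof (cases "w = m")
  case True
  then show ?thesis using assms meet_self unfolding lex_less_def lex_le_def by auto
next
  case False
  have mw: "P m w" using meet(2)[of w a] assms by auto
  have n1: "\<not> P w a" using meet_self[of w a] assms False by auto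
  have n2: "\<not> P a w" using meet_self2[of w a] assms by auto
  have d: "ch m w \<noteq> ch m a" using meet_ch_differ[of w a] assms n1 n2 by auto
  have r: "R (ch m w) (ch m a)" using assms(10,11) n1 n2 unfolding lex_less_def lex_le_def by auto
  have s: "mt w b = m" "\<not> P w b" "le w b \<longleftrightarrow> R (ch m w) (ch m b)"
    using sep[of m w b] assms mw False d by auto
  then show ?thesis using r assms refl unfolding lex_less_def by auto
qed


lemma lex_desc: assumes "w\<in>A" "v\<in>A" "v'\<in>A" "\<not> P w v" "\<not> P v w" "P v v'"
  shows "le w v' \<longleftrightarrow> le w v" "le v' w \<longleftrightarrow> le v w"
proof -
  let ?m = "mt w v"
  have d: "P ?m w" "?m \<noteq> w" "P ?m v" "?m \<noteq> v" "ch ?m w \<noteq> ch ?m v" "?m \<in> A"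
    using meet_ch_differ[of w v] assms by auto
  have mv': "P ?m v'" using trans[of ?m v v'] d assms by auto
  have nv': "?m \<noteq> v'" using antisym[of v ?m] d assms by auto
  have ce: "ch ?m v' = ch ?m v" using ch_desc[of ?m v v'] d assms by auto
  have s1: "le w v' \<longleftrightarrow> R (ch ?m w) (ch ?m v')" using sep(4)[of ?m w v'] d assms mv' nv' ce by auto
  have s2: "le v' w \<longleftrightarrow> R (ch ?m v') (ch ?m w)" using sep(4)[of ?m v' w] d assms mv' nv' ce by auto
  have s3: "le w v \<longleftrightarrow> R (ch ?m w) (ch ?m v)" using sep(4)[of ?m w v] d assms by auto
  have s4: "le v w \<longleftrightarrow> R (ch ?m v) (ch ?m w)" using sep(4)[of ?m v w] d assms by auto
  show "le w v' \<longleftrightarrow> le w v" "le v' w \<longleftrightarrow> le v w" using s1 s2 s3 s4 ce by auto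
qed

end

theorem lemma4p13:
  fixes S :: "'a set" and PS RS :: "'a \<Rightarrow> 'a \<Rightarrow> bool"
    and T :: "'b set" and PT RT :: "'b \<Rightarrow> 'b \<Rightarrow> bool"
    and V :: "'c set" and PV RV :: "'c \<Rightarrow> 'c \<Rightarrow> bool"
    and i :: "'a \<Rightarrow> 'b" and j :: "'b \<Rightarrow> 'c"
  assumes "is_ordered_tree S PS RS" and "is_ordered_tree T PT RT" and "is_ordered_tree V PV RV"
    and "otree_embedding S PS RS T PT RT i" and "otree_embedding T PT RT V PV RV j"
    and "is_leaf S PS x" and "is_leaf T PT y" and "is_leaf V PV z"
    and "conjugate S PS RS T PT RT i x y" and "conjugate T PT RT V PV RV j y z"
  shows "conjugate S PS RS V PV RV (j \<circ> i) x z"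
proof -
  interpret S: otr S PS RS by (rule otr.intro) (rule assms(1))
  interpret T: otr T PT RT by (rule otr.intro) (rule assms(2))
  interpret V: otr V PV RV by (rule otr.intro) (rule assms(3))
  have iT: "\<And>u. u\<in>S \<Longrightarrow> i u \<in> T" using assms(4) unfolding otree_embedding_def otree_morphism_def by blast
  have jV: "\<And>u. u\<in>T \<Longrightarrow> j u \<in> V" using assms(5) unfolding otree_embedding_def otree_morphism_def by blast
  have jmeet: "\<And>u w. u\<in>T \<Longrightarrow> w\<in>T \<Longrightarrow> j (tree_meet T PT u w) = tree_meet V PV (j u) (j w)"
    using assms(5) unfolding otree_embedding_def otree_morphism_def by blast
  have jinj: "inj_on j T" using assms(5) unfolding otree_embedding_def by blast
  have jle: "PV (j u) (j w)" if "u\<in>T" "w\<in>T" "PT u w" for u w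
  proof -
    have "j u = tree_meet V PV (j u) (j w)" using jmeet[OF that(1,2)] T.meet_self[OF that] by simp
    then show ?thesis using V.meet(3)[of "j u" "j w"] jV that by simp
  qed
  have jne: "j u \<noteq> j w" if "u\<in>T" "w\<in>T" "u \<noteq> w" for u w
    using jinj that unfolding inj_on_def by blast
  show ?thesis
  proof (cases "\<forall>x'. is_leaf S PS x' \<longrightarrow> lex_le S PS RS x' x")
    case True
    then have "is_leaf T PT y \<and> (\<forall>y'. is_leaf T PT y' \<longrightarrow> lex_le T PT RT y' y)"
      using assms(9) unfolding conjugate_def by simp
    then have "is_leaf V PV z \<and> (\<forall>z'. is_leaf V PV z' \<longrightarrow> lex_le V PV RV z' z)"
      using assms(10) unfolding conjugate_def by simp
    then show ?thesis using True unfolding conjugate_def by simp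
  next
    case False
    define x' where "x' = (THE x'. is_leaf S PS x' \<and> lex_less S PS RS x x' \<and>
                     (\<forall>x''. is_leaf S PS x'' \<and> lex_less S PS RS x x'' \<longrightarrow> lex_le S PS RS x' x''))"
    have x'p: "is_leaf S PS x' \<and> lex_less S PS RS x x' \<and>
                     (\<forall>x''. is_leaf S PS x'' \<and> lex_less S PS RS x x'' \<longrightarrow> lex_le S PS RS x' x'')"
      unfolding x'_def by (rule theI'[OF S.succ_ex1[OF assms(6) False]])
    have xS: "x \<in> S" "x' \<in> S" using x'p assms(6) S.leaf_in by auto
    define ix where "ix = i x"
    define ix' where "ix' = i x'"
    have ixT: "ix \<in> T" "ix' \<in> T" using iT xS ix_def ix'_def by auto
    define g where "g = (\<lambda>y. is_leaf T PT y \<and> lex_less T PT RT y ix' \<and>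
         tree_meet T PT ix ix' = tree_meet T PT y ix')"
    have H9: "g y \<and> (\<forall>y'. g y' \<longrightarrow> lex_le T PT RT y' y)"
      using assms(9) False unfolding conjugate_def Let_def x'_def[symmetric] g_def ix_def ix'_def
      by simp
    define m where "m = tree_meet T PT y ix'"
    have yT: "y \<in> T" using assms(7) T.leaf_in by auto
    have yl: "lex_less T PT RT y ix'" and mix: "tree_meet T PT ix ix' = m" using H9 unfolding g_def m_def by auto
    have ny1: "\<not> PT y ix'" using T.leaf_le[OF assms(7) ixT(2)] yl unfolding lex_less_def by auto
    have ny2: "\<not> PT ix' y" using yl ny1 unfolding lex_less_def lex_le_def by auto
    have md: "PT m y" "m \<noteq> y" "PT m ix'" "m \<noteq> ix'" "child_toward T PT m y \<noteq> child_toward T PT m ix'" "m \<in> T"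
      using T.meet_ch_differ[OF yT ixT(2) ny1 ny2] unfolding m_def by auto
    define c where "c = child_toward T PT m ix'"
    have c: "c \<in> tree_children T PT m" "PT c ix'" using T.ch_props[of m ix'] md ixT unfolding c_def by auto
    have cT: "c \<in> T" "PT m c" "c \<noteq> m" using T.kid[OF c(1)] by auto
    have rc: "RT (child_toward T PT m y) c" using yl ny1 ny2 T.lex_incomp unfolding lex_less_def m_def c_def by auto
    obtain l where l: "is_leaf T PT l" "PT ix' l" using T.leaf_below[OF ixT(2)] by blast
    have lT: "l \<in> T" using l T.leaf_in by auto
    have chl: "child_toward T PT m l = c" using T.ch_desc[of m ix' l] md ixT lT l unfolding c_def by auto
    have ml: "PT m l" "m \<noteq> l" using T.trans[of m ix' l] T.antisym[of m ix'] md ixT lT l by auto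
    have yls: "lex_le T PT RT y l" "\<not> PT y l"
      using T.sep[of m y l] md yT lT ml chl rc unfolding c_def by auto
    have ynl: "y \<noteq> l" using yls(2) T.refl yT by auto
    have notmax: "\<not> (\<forall>y'. is_leaf T PT y' \<longrightarrow> lex_le T PT RT y' y)"
      using l yls ynl T.lex_antisym[OF yT lT] by auto
    define y'' where "y'' = (THE x'. is_leaf T PT x' \<and> lex_less T PT RT y x' \<and>
                     (\<forall>x''. is_leaf T PT x'' \<and> lex_less T PT RT y x'' \<longrightarrow> lex_le T PT RT x' x''))"
    have y''p: "is_leaf T PT y'' \<and> lex_less T PT RT y y'' \<and>
                     (\<forall>x''. is_leaf T PT x'' \<and> lex_less T PT RT y x'' \<longrightarrow> lex_le T PT RT y'' x'')"
      unfolding y''_def by (rule theI'[OF T.succ_ex1[OF assms(7) notmax]])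
    have y''T: "y'' \<in> T" using y''p T.leaf_in by auto
    have y''l: "lex_le T PT RT y'' l" using y''p l yls ynl unfolding lex_less_def by auto
    have yy'': "lex_le T PT RT y y''" "y \<noteq> y''" using y''p unfolding lex_less_def by auto
    have cy: "PT c y''"
    proof (rule ccontr)
      assume ncy: "\<not> PT c y''"
      have ny''c: "\<not> PT y'' c" using T.leaf_le[of y'' c] y''p cT T.refl ncy by auto
      define e where "e = tree_meet T PT y'' c"
      have e: "e \<in> T" "PT e y''" "PT e c" using T.meet[OF y''T cT(1)] unfolding e_def by auto
      have "PT e m \<or> PT m e" using T.chain[of c e m] e cT md by auto
      show False
      proof (cases "e = m")
        case True
        have my: "PT m y''" "m \<noteq> y''" using e True ny''c by auto
        have chy: "child_toward T PT m y'' \<noteq> c" using T.ch_props[of m y''] my md y''T ncy by auto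
        have k: "child_toward T PT m y'' \<in> tree_children T PT m" using T.ch_props[of m y''] my md y''T by auto
        then have "RT (child_toward T PT m y'') c \<or> RT c (child_toward T PT m y'')"
          using T.Rprops(4)[OF md(6)] c(1) by blast
        then show False
        proof
          assume r: "RT (child_toward T PT m y'') c"
          have s: "tree_meet T PT y'' ix' = m" "\<not> PT y'' ix'" "lex_le T PT RT y'' ix'"
            using T.sep[of m y'' ix'] md my y''T ixT chy r unfolding c_def by auto
          have "g y''" unfolding g_def lex_less_def using s y''p mix T.refl ixT by auto
          then have "lex_le T PT RT y'' y" using H9 by blast
          then show False using T.lex_antisym[OF yT y''T] yy'' by auto
        next
          assume r: "RT c (child_toward T PT m y'')"
          have "lex_le T PT RT l y''" using T.sep(4)[of m l y''] md my y''T lT ml chl chy r by auto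
          then have "l = y''" using T.lex_antisym[OF lT y''T] y''l by auto
          then show False using chl chy by auto
        qed
      next
        case False
        then have em: "PT e m" using \<open>PT e m \<or> PT m e\<close> T.kid_min[OF c(1) e(1)] e ncy by auto
        have n1: "\<not> PT m y''"
        proof
          assume "PT m y''"
          then have "PT m e" using T.meet(4)[OF y''T cT(1) md(6) _ cT(2)] unfolding e_def by blast
          then show False using T.antisym[of e m] em e(1) md(6) False by blast
        qed
        have n2: "\<not> PT y'' m" using T.trans[of y'' m c] y''T md cT ny''c by auto
        have d1: "lex_le T PT RT y'' y \<longleftrightarrow> lex_le T PT RT y'' m" "lex_le T PT RT y y'' \<longleftrightarrow> lex_le T PT RT m y''"
          using T.lex_desc[OF y''T md(6) yT n2 n1 md(1)] by auto
        have d2: "lex_le T PT RT y'' l \<longleftrightarrow> lex_le T PT RT y'' m"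
          using T.lex_desc[OF y''T md(6) lT n2 n1 ml(1)] by auto
        have "y'' = m" using T.lex_antisym[OF y''T md(6)] d1 d2 y''l yy'' by auto
        then show False using n1 T.refl y''T by auto
      qed
    qed
    have my'': "PT m y''" "m \<noteq> y''" using T.trans[of m c y''] cT md y''T cy T.antisym[of c m] by auto
    have chy'': "child_toward T PT m y'' = c" using T.ch_eq[OF c(1) y''T cy] .
    have mtyy: "tree_meet T PT y y'' = m"
      using T.sep(1)[of m y y''] md yT y''T my'' chy'' unfolding c_def by auto
    define g' where "g' = (\<lambda>w. is_leaf V PV w \<and> lex_less V PV RV w (j y'') \<and>
         tree_meet V PV (j y) (j y'') = tree_meet V PV w (j y''))"
    have H10: "g' z \<and> (\<forall>z'. g' z' \<longrightarrow> lex_le V PV RV z' z)"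
      using assms(10) notmax unfolding conjugate_def Let_def y''_def[symmetric] g'_def
      by simp
    have jm: "j m \<in> V" "j c \<in> V" "j y'' \<in> V" "j ix' \<in> V" "j ix \<in> V" "j y \<in> V"
      using jV md cT y''T ixT yT by auto
    have pv: "PV (j m) (j c)" "j m \<noteq> j c" "PV (j c) (j y'')" "PV (j c) (j ix')"
      using jle jne md cT y''T ixT cy c by auto
    have pv2: "PV (j m) (j y'')" "PV (j m) (j ix')" "j m \<noteq> j y''" "j m \<noteq> j ix'"
      using V.trans[of "j m" "j c"] pv jm jne md my'' y''T ixT by auto
    have chV: "child_toward V PV (j m) (j y'') = child_toward V PV (j m) (j ix')"
      using V.ch_desc[of "j m" "j c" "j y''"] V.ch_desc[of "j m" "j c" "j ix'"] pv jm by auto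
    have mV1: "tree_meet V PV (j y) (j y'') = j m" using jmeet[OF yT y''T] mtyy by simp
    have mV2: "tree_meet V PV (j ix) (j ix') = j m" using jmeet[OF ixT] mix by simp
    have eqv: "(lex_less V PV RV w (j y'') \<and> tree_meet V PV w (j y'') = j m) \<longleftrightarrow>
               (lex_less V PV RV w (j ix') \<and> tree_meet V PV w (j ix') = j m)" if "w \<in> V" for w
    proof
      assume h: "lex_less V PV RV w (j y'') \<and> tree_meet V PV w (j y'') = j m"
      show "lex_less V PV RV w (j ix') \<and> tree_meet V PV w (j ix') = j m"
        using V.block[OF jm(1) jm(3) jm(4) that pv2(1) pv2(3) pv2(2) pv2(4) chV] h by blast
    next
      assume h: "lex_less V PV RV w (j ix') \<and> tree_meet V PV w (j ix') = j m"
      show "lex_less V PV RV w (j y'') \<and> tree_meet V PV w (j y'') = j m"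
        using V.block[OF jm(1) jm(4) jm(3) that pv2(2) pv2(4) pv2(1) pv2(3) chV[symmetric]] h by blast
    qed
    define g'' where "g'' = (\<lambda>w. is_leaf V PV w \<and> lex_less V PV RV w (j ix') \<and>
         tree_meet V PV (j ix) (j ix') = tree_meet V PV w (j ix'))"
    have gg: "g' w \<longleftrightarrow> g'' w" for w
      unfolding g'_def g''_def mV1 mV2 using eqv V.leaf_in by (metis (no_types))
    have "g'' z \<and> (\<forall>z'. g'' z' \<longrightarrow> lex_le V PV RV z' z)" using H10 gg by blast
    then show ?thesis
      unfolding conjugate_def if_not_P[OF False] Let_def x'_def[symmetric] g''_def ix_def ix'_def
      by simp
  qed
qed

end
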